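(* For every positive integer $k$ there exists $c_k>0$ such that every graph $G$ on $n\geq 2$ vertices that contains neither the path $P_k$ nor its complement $\overline{P_k}$ as an induced subgraph contains two disjoint vertex sets $X,Y$, each of size at least $c_k\cdot n$, such that either every vertex of $X$ is adjacent to every vertex of $Y$, or no vertex of $X$ is adjacent to any vertex of $Y$ (no condition is imposed on edges inside $X$ or inside $Y$). Consequently, for every $k$ there exists $c'_k>0$ such that every graph on $n$ vertices with no induced $P_k$ and no induced $\overline{P_k}$ contains a clique or a stable set of size at least $n^{c'_k}$.
   Context: All graphs are finite and simple. $P_k$ denotes the path on $k$ vertices and $\overline{P_k}$ its complement graph. "Contains $H$ as an induced subgraph" means some subset of vertices induces a graph isomorphic to $H$. *)

theory Defs
  imports Complex_Main
begin

text \<open>A finite simple graph: finite vertex set V (of naturals, w.l.o.g. up to isomorphism)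
 and a symmetric irreflexive adjacency relation E (only its restriction to V matters).\<close>
definition simple_graph :: "nat set \<Rightarrow> (nat \<Rightarrow> nat \<Rightarrow> bool) \<Rightarrow> bool" where
  "simple_graph V E \<longleftrightarrow> finite V \<and> (\<forall>x y. E x y \<longrightarrow> E y x) \<and> (\<forall>x. \<not> E x x)"

definition contains_induced :: "nat set \<Rightarrow> (nat \<Rightarrow> nat \<Rightarrow> bool) \<Rightarrow> nat \<Rightarrow> (nat \<Rightarrow> nat \<Rightarrow> bool) \<Rightarrow> bool" where
  "contains_induced V E k H \<longleftrightarrow>
     (\<exists>f. inj_on f {0..<k} \<and> f ` {0..<k} \<subseteq> V \<and>
          (\<forall>i<k. \<forall>j<k. i \<noteq> j \<longrightarrow> (E (f i) (f j) \<longleftrightarrow> H i j)))"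

definition path_adj :: "nat \<Rightarrow> nat \<Rightarrow> bool" where
  "path_adj i j \<longleftrightarrow> i + 1 = j \<or> j + 1 = i"

definition copath_adj :: "nat \<Rightarrow> nat \<Rightarrow> bool" where
  "copath_adj i j \<longleftrightarrow> i \<noteq> j \<and> \<not> path_adj i j"

definition is_clique :: "(nat \<Rightarrow> nat \<Rightarrow> bool) \<Rightarrow> nat set \<Rightarrow> bool" where
  "is_clique E S \<longleftrightarrow> (\<forall>x\<in>S. \<forall>y\<in>S. x \<noteq> y \<longrightarrow> E x y)"

definition is_stable :: "(nat \<Rightarrow> nat \<Rightarrow> bool) \<Rightarrow> nat set \<Rightarrow> bool" where
  "is_stable E S \<longleftrightarrow> (\<forall>x\<in>S. \<forall>y\<in>S. \<not> E x y)"

end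

theory Submission
  imports Defs
begin

definition nb :: "(nat \<Rightarrow> nat \<Rightarrow> bool) \<Rightarrow> nat \<Rightarrow> nat set \<Rightarrow> nat" where
  "nb F v S = card {u\<in>S. F v u}"

definition ec :: "(nat \<Rightarrow> nat \<Rightarrow> bool) \<Rightarrow> nat set \<Rightarrow> nat set \<Rightarrow> nat" where
  "ec F A B = (\<Sum>a\<in>A. nb F a B)"

definition cE :: "(nat \<Rightarrow> nat \<Rightarrow> bool) \<Rightarrow> nat \<Rightarrow> nat \<Rightarrow> bool" where
  "cE E x y \<longleftrightarrow> x \<noteq> y \<and> \<not> E x y"

definition sg :: "(nat \<Rightarrow> nat \<Rightarrow> bool) \<Rightarrow> bool" where
  "sg E \<longleftrightarrow> (\<forall>x y. E x y \<longrightarrow> E y x) \<and> (\<forall>x. \<not> E x x)"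

lemma nb_le: "finite S \<Longrightarrow> nb F v S \<le> card S"
  unfolding nb_def by (intro card_mono) auto

lemma nb_mono: "finite T \<Longrightarrow> S \<subseteq> T \<Longrightarrow> nb F v S \<le> nb F v T"
  unfolding nb_def by (intro card_mono) auto

lemma nb_sum: "finite S \<Longrightarrow> nb F v S = (\<Sum>u\<in>S. if F v u then 1 else 0)"
  unfolding nb_def by (simp add: sum.If_cases Int_def)

lemma ec_swap: assumes "sg F" "finite A" "finite B" shows "ec F A B = ec F B A"
proof -
  have "ec F A B = (\<Sum>a\<in>A. \<Sum>b\<in>B. if F a b then 1 else 0)"
    unfolding ec_def using assms by (simp add: nb_sum)
  also have "\<dots> = (\<Sum>b\<in>B. \<Sum>a\<in>A. if F a b then 1 else 0)" by (rule sum.swap)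
  also have "\<dots> = (\<Sum>b\<in>B. \<Sum>a\<in>A. if F b a then 1 else 0)"
    using assms(1) unfolding sg_def by (intro sum.cong refl) metis
  also have "\<dots> = ec F B A" unfolding ec_def using assms by (simp add: nb_sum)
  finally show ?thesis .
qed

lemma nb_union: "finite A \<Longrightarrow> finite B \<Longrightarrow> A \<inter> B = {} \<Longrightarrow> nb F v (A \<union> B) = nb F v A + nb F v B"
  unfolding nb_def by (subst card_Un_disjoint[symmetric]) (auto intro: arg_cong[where f=card])

lemma ec_union2: "finite A \<Longrightarrow> finite B \<Longrightarrow> A \<inter> B = {} \<Longrightarrow> ec F X (A \<union> B) = ec F X A + ec F X B"
  unfolding ec_def by (simp add: nb_union sum.distrib)

lemma ec_union1: "finite A \<Longrightarrow> finite B \<Longrightarrow> A \<inter> B = {} \<Longrightarrow> ec F (A \<union> B) Y = ec F A Y + ec F B Y"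
  unfolding ec_def by (simp add: sum.union_disjoint)

lemma ec_le: "finite B \<Longrightarrow> ec F A B \<le> card A * card B"
proof -
  assume "finite B"
  hence "ec F A B \<le> (\<Sum>a\<in>A. card B)" unfolding ec_def by (intro sum_mono nb_le)
  thus ?thesis by simp
qed

lemma ec_mono2: "finite B \<Longrightarrow> B' \<subseteq> B \<Longrightarrow> ec F A B' \<le> ec F A B"
  unfolding ec_def by (intro sum_mono nb_mono)

lemma nb_cE: assumes "finite B" "v \<notin> B" shows "nb (cE E) v B = card B - nb E v B"
proof -
  have "{u\<in>B. cE E v u} = B - {u\<in>B. E v u}" using assms unfolding cE_def by auto
  thus ?thesis unfolding nb_def using assms by (simp add: card_Diff_subset)
qed

lemma sg_cE: "sg E \<Longrightarrow> sg (cE E)" unfolding sg_def cE_def by blast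

lemma ci_cE: "contains_induced V (cE E) k path_adj \<longleftrightarrow> contains_induced V E k copath_adj"
  unfolding contains_induced_def
proof (intro iff_exI conj_cong refl)
  fix f :: "nat \<Rightarrow> nat" assume inj: "inj_on f {0..<k}"
  have ne: "\<And>i j. i<k \<Longrightarrow> j<k \<Longrightarrow> i\<noteq>j \<Longrightarrow> f i \<noteq> f j"
    using inj by (simp add: inj_on_eq_iff)
  show "(\<forall>i<k. \<forall>j<k. i \<noteq> j \<longrightarrow> cE E (f i) (f j) = path_adj i j) =
        (\<forall>i<k. \<forall>j<k. i \<noteq> j \<longrightarrow> E (f i) (f j) = copath_adj i j)"
    unfolding cE_def copath_adj_def using ne by simp blast
qed

lemma ci_mono: assumes "contains_induced U E k H" "U \<subseteq> V" shows "contains_induced V E k H"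
proof -
  obtain f where "inj_on f {0..<k}" "f ` {0..<k} \<subseteq> U" "\<forall>i<k. \<forall>j<k. i \<noteq> j \<longrightarrow> (E (f i) (f j) \<longleftrightarrow> H i j)"
    using assms(1) unfolding contains_induced_def by auto
  thus ?thesis unfolding contains_induced_def using assms(2) by (intro exI[of _ f]) auto
qed

lemma trim: "finite X \<Longrightarrow> m \<le> card X \<Longrightarrow> \<exists>Y\<subseteq>X. card Y = m \<and> sum g Y * card X \<le> sum g X * (m::nat)"
proof (induction "card X - m" arbitrary: X)
  case 0
  thus ?case by (intro exI[of _ X]) auto
next
  case (Suc d)
  hence ne: "X \<noteq> {}" by auto
  obtain x where x: "x \<in> X" "\<forall>y\<in>X. g y \<le> g x"
    using Max_in[of "g ` X"] Max_ge[of "g ` X"] ne Suc.prems by (metis (no_types, lifting) finite_imageI image_iff image_is_empty)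
  let ?X = "X - {x}"
  have cx: "card ?X = card X - 1" using x Suc.prems by simp
  have sX: "sum g X = sum g ?X + g x" using x Suc.prems by (simp add: sum.remove)
  have "sum g X \<le> (\<Sum>y\<in>X. g x)" using x by (intro sum_mono) auto
  hence avg: "sum g X \<le> card X * g x" by simp
  obtain Y where Y: "Y \<subseteq> ?X" "card Y = m" "sum g Y * card ?X \<le> sum g ?X * m"
    using Suc.hyps(1)[of ?X] Suc.hyps(2) Suc.prems cx by fastforce
  have "sum g Y * card X * card ?X = sum g Y * card ?X * card X" by simp
  also have "\<dots> \<le> sum g ?X * m * card X" using Y(3) by simp
  also have "\<dots> \<le> sum g X * m * card ?X"
  proof -
    have "sum g ?X * card X \<le> sum g X * card ?X"
    proof -
      have "sum g ?X * card X + sum g X = sum g ?X * card X + sum g ?X + g x" using sX by simp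
      have cX: "card X = card ?X + 1" using cx ne Suc.prems by (simp add: card_gt_0_iff)
      have "sum g ?X * card X = sum g ?X * card ?X + sum g ?X" using cX by simp
      moreover have "sum g X * card ?X = sum g ?X * card ?X + g x * card ?X" using sX by (simp add: algebra_simps)
      moreover have "sum g ?X \<le> g x * card ?X"
      proof -
        have "sum g ?X \<le> (\<Sum>y\<in>?X. g x)" using x by (intro sum_mono) auto
        thus ?thesis by (simp add: mult.commute)
      qed
      ultimately show ?thesis by simp
    qed
    thus ?thesis by (metis mult.assoc mult.commute mult_le_mono1)
  qed
  finally have "sum g Y * card X * card ?X \<le> sum g X * m * card ?X" .
  show ?case
  proof (cases "m = 0")
    case True
    thus ?thesis by (intro exI[of _ "{}"]) auto
  next
    case False
    hence "card ?X > 0" using Suc.hyps(2) cx by linarith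
    with \<open>sum g Y * card X * card ?X \<le> sum g X * m * card ?X\<close>
    have "sum g Y * card X \<le> sum g X * m" by simp
    thus ?thesis using Y by auto
  qed
qed

lemma step_lemma:
  fixes \<epsilon> :: real
  assumes fD: "finite D" and fR: "finite R" and "D \<noteq> {}"
  shows "(\<exists>v\<in>D. real (nb E v R) \<ge> \<epsilon> * card R \<and> real (nb (cE E) v R) \<ge> \<epsilon> * card R) \<or>
         (\<exists>A\<subseteq>D. 2 * card A \<ge> card D \<and>
            (real (ec E A R) \<le> \<epsilon> * card A * card R \<or> real (ec (cE E) A R) \<le> \<epsilon> * card A * card R))"
proof (rule disjCI)
  assume ng: "\<not> (\<exists>A\<subseteq>D. 2 * card A \<ge> card D \<and>
            (real (ec E A R) \<le> \<epsilon> * card A * card R \<or> real (ec (cE E) A R) \<le> \<epsilon> * card A * card R))"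
  let ?A1 = "{v\<in>D. real (nb E v R) < \<epsilon> * card R}"
  let ?A2 = "{v\<in>D. real (nb (cE E) v R) < \<epsilon> * card R}"
  have e1: "real (ec E ?A1 R) \<le> \<epsilon> * card ?A1 * card R"
  proof -
    have "real (ec E ?A1 R) = (\<Sum>a\<in>?A1. real (nb E a R))" unfolding ec_def by simp
    also have "\<dots> \<le> (\<Sum>a\<in>?A1. \<epsilon> * card R)" by (intro sum_mono) auto
    finally show ?thesis by (simp add: mult_ac)
  qed
  have e2: "real (ec (cE E) ?A2 R) \<le> \<epsilon> * card ?A2 * card R"
  proof -
    have "real (ec (cE E) ?A2 R) = (\<Sum>a\<in>?A2. real (nb (cE E) a R))" unfolding ec_def by simp
    also have "\<dots> \<le> (\<Sum>a\<in>?A2. \<epsilon> * card R)" by (intro sum_mono) auto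
    finally show ?thesis by (simp add: mult_ac)
  qed
  have "\<not> 2 * card ?A1 \<ge> card D"
  proof
    assume h: "2 * card ?A1 \<ge> card D"
    have "?A1 \<subseteq> D" by auto
    with h e1 have "\<exists>A\<subseteq>D. 2 * card A \<ge> card D \<and>
            (real (ec E A R) \<le> \<epsilon> * card A * card R \<or> real (ec (cE E) A R) \<le> \<epsilon> * card A * card R)"
      by (intro exI[of _ ?A1]) auto
    with ng show False by contradiction
  qed
  moreover have "\<not> 2 * card ?A2 \<ge> card D"
  proof
    assume h: "2 * card ?A2 \<ge> card D"
    have "?A2 \<subseteq> D" by auto
    with h e2 have "\<exists>A\<subseteq>D. 2 * card A \<ge> card D \<and>
            (real (ec E A R) \<le> \<epsilon> * card A * card R \<or> real (ec (cE E) A R) \<le> \<epsilon> * card A * card R)"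
      by (intro exI[of _ ?A2]) auto
    with ng show False by contradiction
  qed
  moreover have "card D \<le> card ?A1 + card ?A2" if "D \<subseteq> ?A1 \<union> ?A2"
  proof -
    have "card D \<le> card (?A1 \<union> ?A2)" using that fD by (intro card_mono) auto
    also have "\<dots> \<le> card ?A1 + card ?A2" by (rule card_Un_le)
    finally show ?thesis .
  qed
  ultimately have "\<not> D \<subseteq> ?A1 \<union> ?A2" by linarith
  thus "\<exists>v\<in>D. real (nb E v R) \<ge> \<epsilon> * card R \<and> real (nb (cE E) v R) \<ge> \<epsilon> * card R"
    by (auto simp: not_less)
qed

definition pairc :: "(nat \<Rightarrow> nat \<Rightarrow> bool) \<Rightarrow> nat set \<Rightarrow> real \<Rightarrow> real \<Rightarrow> bool" where
  "pairc E U \<epsilon> \<delta> \<longleftrightarrow> (\<exists>A B. A \<subseteq> U \<and> B \<subseteq> U \<and> A \<inter> B = {} \<and>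
      real (card A) \<ge> \<delta> * card U \<and> real (card B) \<ge> \<delta> * card U \<and>
      (real (ec E A B) \<le> \<epsilon> * card A * card B \<or> real (ec (cE E) A B) \<le> \<epsilon> * card A * card B))"

definition pinv :: "(nat \<Rightarrow> nat \<Rightarrow> bool) \<Rightarrow> nat set \<Rightarrow> real \<Rightarrow> nat \<Rightarrow> bool" where
  "pinv E U \<epsilon> i \<longleftrightarrow> (\<exists>f D R. inj_on f {0..<i} \<and> f ` {0..<i} \<subseteq> U \<and>
      (\<forall>a<i. \<forall>b<i. a \<noteq> b \<longrightarrow> (E (f a) (f b) \<longleftrightarrow> path_adj a b)) \<and>
      D \<subseteq> U \<and> R \<subseteq> U \<and> D \<inter> R = {} \<and> D \<inter> f ` {0..<i} = {} \<and> R \<inter> f ` {0..<i} = {} \<and>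
      (\<forall>d\<in>D. \<forall>j<i. E d (f j) \<longleftrightarrow> j + 1 = i) \<and> (\<forall>r\<in>R. \<forall>j<i. \<not> E r (f j)) \<and>
      real (card D) \<ge> \<epsilon> ^ i * card U / 3 \<and> real (card R) \<ge> \<epsilon> ^ i * card U / 3)"

lemma pinv0: assumes "finite U" "card U \<ge> 3" shows "pinv E U \<epsilon> 0"
proof -
  obtain U1 where U1: "U1 \<subseteq> U" "card U1 = card U div 2"
    using obtain_subset_with_card_n[of "card U div 2" U] by auto
  have fin1: "finite U1" using U1 assms finite_subset by blast
  have c2: "card (U - U1) = card U - card U div 2" using U1 fin1 by (simp add: card_Diff_subset)
  have a: "real (card U div 2) \<ge> card U / 3" using assms(2) by linarith
  have b: "real (card U - card U div 2) \<ge> card U / 3" using assms(2) by linarith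
  show ?thesis unfolding pinv_def
    by (rule exI[of _ id], rule exI[of _ U1], rule exI[of _ "U - U1"]) (use U1 c2 a b in auto)
qed

lemma pinv_step:
  assumes sg: "sg E" and fU: "finite U" and cU: "card U \<ge> 3" and e0: "0 < \<epsilon>" and e1: "\<epsilon> \<le> 1"
    and ik: "i < k" and inv: "pinv E U \<epsilon> i"
  shows "pinv E U \<epsilon> (Suc i) \<or> pairc E U \<epsilon> (\<epsilon> ^ k / 6)"
proof -
  obtain f D R where f: "inj_on f {0..<i}" "f ` {0..<i} \<subseteq> U"
      "\<forall>a<i. \<forall>b<i. a \<noteq> b \<longrightarrow> (E (f a) (f b) \<longleftrightarrow> path_adj a b)"
    and DR: "D \<subseteq> U" "R \<subseteq> U" "D \<inter> R = {}" "D \<inter> f ` {0..<i} = {}" "R \<inter> f ` {0..<i} = {}"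
    and Dp: "\<forall>d\<in>D. \<forall>j<i. E d (f j) \<longleftrightarrow> j + 1 = i" and Rp: "\<forall>r\<in>R. \<forall>j<i. \<not> E r (f j)"
    and cD: "real (card D) \<ge> \<epsilon> ^ i * card U / 3" and cR: "real (card R) \<ge> \<epsilon> ^ i * card U / 3"
    using inv unfolding pinv_def by (elim exE conjE) (rule that; assumption)
  have fD: "finite D" and fR: "finite R" using DR fU finite_subset by auto
  have pos: "\<epsilon> ^ i * card U / 3 > 0" using e0 cU by simp
  have Dne: "D \<noteq> {}" using cD pos by auto
  have pk: "\<epsilon> ^ k \<le> \<epsilon> ^ i" using e0 e1 ik by (intro power_decreasing) auto
  have cUpos: "real (card U) \<ge> 0" by simp
  from step_lemma[OF fD fR Dne, where E=E and \<epsilon>=\<epsilon>]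
  show ?thesis
  proof
    assume "\<exists>v\<in>D. real (nb E v R) \<ge> \<epsilon> * card R \<and> real (nb (cE E) v R) \<ge> \<epsilon> * card R"
    then obtain v where v: "v \<in> D" "real (nb E v R) \<ge> \<epsilon> * card R" "real (nb (cE E) v R) \<ge> \<epsilon> * card R"
      by blast
    define g where "g = f(i := v)"
    define D' where "D' = {u\<in>R. E v u}"
    define R' where "R' = {u\<in>R. cE E v u}"
    have vR: "v \<notin> R" using v DR by auto
    have vf: "v \<notin> f ` {0..<i}" using v DR by auto
    have gi: "g ` {0..<Suc i} = insert v (f ` {0..<i})" unfolding g_def by (auto simp: image_def less_Suc_eq)
    have "inj_on g {0..<Suc i}"
    proof -
      have "inj_on g {0..<i}" using f(1) unfolding g_def inj_on_def by auto
      moreover have "g i \<notin> g ` {0..<i}" using vf unfolding g_def by (auto simp: image_def)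
      ultimately show ?thesis by (simp add: atLeast0_lessThan_Suc inj_on_insert)
    qed
    moreover have "g ` {0..<Suc i} \<subseteq> U" using gi f(2) v DR by auto
    moreover have "\<forall>a<Suc i. \<forall>b<Suc i. a \<noteq> b \<longrightarrow> (E (g a) (g b) \<longleftrightarrow> path_adj a b)"
    proof (intro allI impI)
      fix a b assume ab: "a < Suc i" "b < Suc i" "a \<noteq> b"
      have Ev: "E v (f j) \<longleftrightarrow> j + 1 = i" if "j < i" for j using Dp v(1) that by blast
      have Ev': "E (f j) v \<longleftrightarrow> j + 1 = i" if "j < i" for j using Ev[OF that] sg unfolding sg_def by blast
      show "E (g a) (g b) \<longleftrightarrow> path_adj a b"
      proof (cases "a = i")
        case True
        hence "b < i" using ab by auto
        thus ?thesis using True Ev unfolding g_def path_adj_def by auto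
      next
        case False
        hence a: "a < i" using ab by auto
        show ?thesis
        proof (cases "b = i")
          case True
          thus ?thesis using a Ev' unfolding g_def path_adj_def by auto
        next
          case False
          thus ?thesis using a ab f(3) \<open>a \<noteq> i\<close> unfolding g_def by auto
        qed
      qed
    qed
    moreover have "D' \<subseteq> U" "R' \<subseteq> U" "D' \<inter> R' = {}" using DR unfolding D'_def R'_def cE_def by auto
    moreover have "D' \<inter> g ` {0..<Suc i} = {}" "R' \<inter> g ` {0..<Suc i} = {}"
      using gi DR vR unfolding D'_def R'_def by auto
    moreover have "\<forall>d\<in>D'. \<forall>j<Suc i. E d (g j) \<longleftrightarrow> j + 1 = Suc i"
    proof (intro ballI allI impI)
      fix d j assume d: "d \<in> D'" and j: "j < Suc i"
      show "E d (g j) \<longleftrightarrow> j + 1 = Suc i"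
      proof (cases "j = i")
        case True thus ?thesis using d sg unfolding D'_def g_def sg_def by auto
      next
        case False thus ?thesis using d j Rp unfolding D'_def g_def by auto
      qed
    qed
    moreover have "\<forall>r\<in>R'. \<forall>j<Suc i. \<not> E r (g j)"
    proof (intro ballI allI impI)
      fix r j assume r: "r \<in> R'" and j: "j < Suc i"
      show "\<not> E r (g j)"
      proof (cases "j = i")
        case True thus ?thesis using r sg unfolding R'_def g_def sg_def cE_def by auto
      next
        case False thus ?thesis using r j Rp unfolding R'_def g_def by auto
      qed
    qed
    moreover have "real (card D') \<ge> \<epsilon> ^ Suc i * card U / 3"
    proof -
      have "real (card D') = real (nb E v R)" unfolding D'_def nb_def by simp
      moreover have "\<epsilon> * card R \<ge> \<epsilon> * (\<epsilon> ^ i * card U / 3)" using cR e0 by (intro mult_left_mono) auto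
      ultimately show ?thesis using v(2) by simp
    qed
    moreover have "real (card R') \<ge> \<epsilon> ^ Suc i * card U / 3"
    proof -
      have "real (card R') = real (nb (cE E) v R)" unfolding R'_def nb_def by simp
      moreover have "\<epsilon> * card R \<ge> \<epsilon> * (\<epsilon> ^ i * card U / 3)" using cR e0 by (intro mult_left_mono) auto
      ultimately show ?thesis using v(3) by simp
    qed
    ultimately have "pinv E U \<epsilon> (Suc i)" unfolding pinv_def by blast
    thus ?thesis ..
  next
    assume "\<exists>A\<subseteq>D. 2 * card A \<ge> card D \<and>
            (real (ec E A R) \<le> \<epsilon> * card A * card R \<or> real (ec (cE E) A R) \<le> \<epsilon> * card A * card R)"
    then obtain A where A: "A \<subseteq> D" "2 * card A \<ge> card D"
      "real (ec E A R) \<le> \<epsilon> * card A * card R \<or> real (ec (cE E) A R) \<le> \<epsilon> * card A * card R" by blast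
    have "\<epsilon> ^ k * card U / 6 \<le> \<epsilon> ^ i * card U / 6" using pk by (intro divide_right_mono mult_right_mono) auto
    moreover have "real (card A) \<ge> \<epsilon> ^ i * card U / 6"
    proof -
      have "real (2 * card A) \<ge> real (card D)" using A(2) by linarith
      thus ?thesis using cD by simp
    qed
    moreover have "\<epsilon> ^ i * card U / 6 \<le> \<epsilon> ^ i * card U / 3" using pos by linarith
    ultimately have "pairc E U \<epsilon> (\<epsilon> ^ k / 6)" unfolding pairc_def
      using A DR cR by (intro exI[of _ A] exI[of _ R]) auto
    thus ?thesis ..
  qed
qed

lemma lemmaE:
  assumes sg: "sg E" and fU: "finite U" and cU: "card U \<ge> 3" and e0: "0 < \<epsilon>" and e1: "\<epsilon> \<le> 1"
    and nP: "\<not> contains_induced U E k path_adj"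
  shows "pairc E U \<epsilon> (\<epsilon> ^ k / 6)"
proof -
  have "\<forall>i\<le>k. pinv E U \<epsilon> i \<or> pairc E U \<epsilon> (\<epsilon> ^ k / 6)"
  proof (intro allI impI)
    fix i assume "i \<le> k"
    thus "pinv E U \<epsilon> i \<or> pairc E U \<epsilon> (\<epsilon> ^ k / 6)"
    proof (induction i)
      case 0 thus ?case using pinv0[OF fU cU] by auto
    next
      case (Suc i)
      thus ?case using pinv_step[OF sg fU cU e0 e1, of i k] by auto
    qed
  qed
  hence "pinv E U \<epsilon> k \<or> pairc E U \<epsilon> (\<epsilon> ^ k / 6)" by auto
  moreover have "\<not> pinv E U \<epsilon> k"
  proof
    assume "pinv E U \<epsilon> k"
    then obtain f where f: "inj_on f {0..<k}" "f ` {0..<k} \<subseteq> U"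
      "\<forall>a<k. \<forall>b<k. a \<noteq> b \<longrightarrow> (E (f a) (f b) \<longleftrightarrow> path_adj a b)" unfolding pinv_def
      by (elim exE conjE) (rule that; assumption)
    hence "contains_induced U E k path_adj" unfolding contains_induced_def by (intro exI[of _ f]) auto
    with nP show False ..
  qed
  ultimately show ?thesis by blast
qed

definition Sp :: "(nat \<Rightarrow> nat \<Rightarrow> bool) \<Rightarrow> nat \<Rightarrow> real \<Rightarrow> nat set \<Rightarrow> bool" where
  "Sp F p \<eta> T \<longleftrightarrow> (\<exists>s::nat. real (ec F T T) \<le> real s * real (card T) + \<eta> * (real (card T))^2 \<and> card T \<ge> p * s)"

lemma Sp_triv: assumes "finite T" "p \<le> 1" "0 \<le> \<eta>" shows "Sp F p \<eta> T"
  unfolding Sp_def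
proof (intro exI[of _ "card T"] conjI)
  have "real (ec F T T) \<le> real (card T) * real (card T)" using ec_le[OF \<open>finite T\<close>, of F T] by (metis of_nat_le_iff of_nat_mult)
  moreover have "\<eta> * (real (card T))^2 \<ge> 0" using \<open>0 \<le> \<eta>\<close> by simp
  ultimately show "real (ec F T T) \<le> real (card T) * real (card T) + \<eta> * (real (card T))^2" by simp
  show "card T \<ge> p * card T" using \<open>p \<le> 1\<close> by (cases p) auto
qed

lemma Sp_single: assumes "sg F" "0 \<le> \<eta>" shows "Sp F p \<eta> {u}"
proof -
  have "{ua. ua = u \<and> F u ua} = {}" using assms(1) unfolding sg_def by auto
  hence "ec F {u} {u} = 0" by (simp add: ec_def nb_def)
  thus ?thesis unfolding Sp_def using assms(2) by (intro exI[of _ 0]) auto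
qed

lemma trim2:
  fixes \<epsilon> :: real
  assumes sg: "sg F" and fA: "finite A" and fB: "finite B" and Ane: "A \<noteq> {}" and Bne: "B \<noteq> {}"
    and e: "real (ec F A B) \<le> \<epsilon> * card A * card B" and mA: "m \<le> card A" and mB: "m \<le> card B"
  shows "\<exists>A1 B1. A1 \<subseteq> A \<and> B1 \<subseteq> B \<and> card A1 = m \<and> card B1 = m \<and> real (ec F A1 B1) \<le> \<epsilon> * m * m"
proof -
  have cA: "card A > 0" and cB: "card B > 0" using Ane Bne fA fB by auto
  obtain A1 where A1: "A1 \<subseteq> A" "card A1 = m" "sum (\<lambda>a. nb F a B) A1 * card A \<le> sum (\<lambda>a. nb F a B) A * m"
    using trim[OF fA mA] by blast
  have "real (ec F A1 B) * card A \<le> real (ec F A B) * m" using A1(3) unfolding ec_def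
    by (metis of_nat_le_iff of_nat_mult)
  also have "\<dots> \<le> \<epsilon> * card A * card B * m" using e by (intro mult_right_mono) auto
  finally have 1: "real (ec F A1 B) \<le> \<epsilon> * card B * m" using cA by (simp add: mult.commute mult.left_commute)
  have fA1: "finite A1" using A1 fA finite_subset by blast
  obtain B1 where B1: "B1 \<subseteq> B" "card B1 = m" "sum (\<lambda>b. nb F b A1) B1 * card B \<le> sum (\<lambda>b. nb F b A1) B * m"
    using trim[OF fB mB] by blast
  have fB1: "finite B1" using B1 fB finite_subset by blast
  have "real (ec F B1 A1) * card B \<le> real (ec F B A1) * m" using B1(3) unfolding ec_def
    by (metis of_nat_le_iff of_nat_mult)
  also have "ec F B A1 = ec F A1 B" using ec_swap[OF sg fB fA1] .
  also have "real (ec F A1 B) * m \<le> \<epsilon> * card B * m * m" using 1 by (intro mult_right_mono) auto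
  finally have "real (ec F B1 A1) \<le> \<epsilon> * m * m" using cB by (simp add: mult.commute mult.left_commute)
  moreover have "ec F B1 A1 = ec F A1 B1" using ec_swap[OF sg fB1 fA1] .
  ultimately show ?thesis using A1 B1 by auto
qed

lemma extend:
  fixes \<epsilon> \<mu>1 \<eta> :: real
  assumes sg: "sg F" and fA1: "finite A1" and fB1: "finite B1" and disj: "A1 \<inter> B1 = {}"
    and cA1: "card A1 = m" and cB1: "card B1 = m" and m0: "m > 0"
    and e: "real (ec F A1 B1) \<le> \<epsilon> * m * m" and e0: "0 \<le> \<epsilon>"
    and T': "T' \<subseteq> B1" "real (card T') \<ge> \<mu>1 * m" and Sp': "Sp F (p - 1) \<eta> T'"
    and em: "\<epsilon> \<le> \<eta> * \<mu>1" and p2: "p \<ge> 2" and \<mu>1: "\<mu>1 > 0" and \<eta>: "\<eta> \<ge> 0"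
  shows "\<exists>T. T \<subseteq> A1 \<union> B1 \<and> card T \<ge> card T' \<and> Sp F p \<eta> T"
proof -
  define t where "t = card T'"
  obtain s' :: nat where s': "real (ec F T' T') \<le> real s' * real t + \<eta> * (real t)^2" "t \<ge> (p - 1) * s'"
    using Sp' unfolding Sp_def t_def by blast
  define a where "a = t div (p - 1)"
  have fT': "finite T'" using T' fB1 finite_subset by blast
  have tm: "t \<le> m" unfolding t_def using T'(1) cB1 fB1 card_mono by blast
  have at: "a \<le> t" unfolding a_def by simp
  have sa: "s' \<le> a" unfolding a_def using s'(2) p2
    by (subst less_eq_div_iff_mult_less_eq) (auto simp: mult.commute)
  have ta: "(p - 1) * a \<le> t" unfolding a_def by (metis div_times_less_eq_dividend mult.commute)
  have aA1: "a \<le> card A1" using at tm cA1 by simp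
  obtain A2 where A2: "A2 \<subseteq> A1" "card A2 = a"
      "sum (\<lambda>x. nb F x T') A2 * card A1 \<le> sum (\<lambda>x. nb F x T') A1 * a"
    using trim[OF fA1 aA1, where g="\<lambda>x. nb F x T'"] by blast
  have fA2: "finite A2" using A2 fA1 finite_subset by blast
  have "real (ec F A2 T') * m \<le> real (ec F A1 T') * a" using A2(3) cA1 unfolding ec_def
    by (metis of_nat_le_iff of_nat_mult)
  also have "\<dots> \<le> real (ec F A1 B1) * a" using ec_mono2[OF fB1 T'(1)] by (intro mult_right_mono) auto
  also have "\<dots> \<le> \<epsilon> * m * m * a" using e by (intro mult_right_mono) auto
  finally have "real (ec F A2 T') \<le> \<epsilon> * m * a" using m0 by (simp add: mult.commute mult.left_commute)
  also have "\<epsilon> * m * a \<le> \<eta> * \<mu>1 * m * a" using em by (intro mult_right_mono) auto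
  also have "\<eta> * \<mu>1 * m * a \<le> \<eta> * t * a"
  proof -
    have "\<mu>1 * m \<le> t" using T'(2) t_def by simp
    hence "\<eta> * (\<mu>1 * m) \<le> \<eta> * t" using \<eta> by (intro mult_left_mono)
    thus ?thesis by (intro mult_right_mono) (auto simp: mult.assoc)
  qed
  finally have cross: "real (ec F A2 T') \<le> \<eta> * t * a" .
  have dj: "A2 \<inter> T' = {}" using A2 T' disj by auto
  define T where "T = A2 \<union> T'"
  have cT: "card T = a + t" unfolding T_def t_def using fA2 fT' dj A2 by (simp add: card_Un_disjoint)
  have "ec F T T = ec F A2 A2 + ec F A2 T' + (ec F T' A2 + ec F T' T')"
    unfolding T_def using fA2 fT' dj by (simp add: ec_union1 ec_union2)
  also have "ec F T' A2 = ec F A2 T'" using ec_swap[OF sg fT' fA2] .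
  finally have "real (ec F T T) = real (ec F A2 A2) + 2 * real (ec F A2 T') + real (ec F T' T')" by simp
  also have "\<dots> \<le> real a * a + 2 * (\<eta> * t * a) + (s' * t + \<eta> * t^2)"
    using ec_le[OF fA2, of F A2] A2(2) cross s'(1) by (intro add_mono) (auto simp flip: of_nat_mult)
  also have "\<dots> \<le> real a * (a + t) + \<eta> * (real a + t)^2"
  proof -
    have "real s' * t \<le> real a * t" using sa by (intro mult_right_mono) auto
    moreover have "\<eta> * a^2 \<ge> 0" using \<eta> by simp
    ultimately show ?thesis by (simp add: power2_eq_square algebra_simps)
  qed
  finally have "real (ec F T T) \<le> real a * real (card T) + \<eta> * (real (card T))^2" using cT by simp
  moreover have "card T \<ge> p * a"
  proof -
    have "p * a = (p - 1) * a + a" using p2 by (cases p) auto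
    thus ?thesis using cT ta by linarith
  qed
  ultimately have "Sp F p \<eta> T" unfolding Sp_def by blast
  moreover have "T \<subseteq> A1 \<union> B1" using A2 T' unfolding T_def by auto
  moreover have "card T \<ge> card T'" using cT t_def by simp
  ultimately show ?thesis by blast
qed

definition RP :: "nat \<Rightarrow> nat \<Rightarrow> nat \<Rightarrow> real \<Rightarrow> real \<Rightarrow> bool" where
  "RP k p q \<eta> \<mu> \<longleftrightarrow> \<mu> > 0 \<and> (\<forall>V E U. sg E \<and> finite V \<and> \<not> contains_induced V E k path_adj \<and> U \<subseteq> V \<longrightarrow>
     (\<exists>T. T \<subseteq> U \<and> real (card T) \<ge> \<mu> * real (card U) \<and> (Sp E p \<eta> T \<or> Sp (cE E) q \<eta> T)))"

lemma small_case:
  assumes "sg E" "finite U" "card U < 3" "0 < \<mu>" "\<mu> \<le> 1/3" "0 \<le> \<eta>"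
  shows "\<exists>T. T \<subseteq> U \<and> real (card T) \<ge> \<mu> * real (card U) \<and> (Sp E p \<eta> T \<or> Sp (cE E) q \<eta> T)"
proof (cases "U = {}")
  case True
  thus ?thesis using Sp_triv[of "{}" 0 \<eta> E] assms by (intro exI[of _ "{}"]) (auto simp: Sp_def ec_def)
next
  case False
  then obtain u where u: "u \<in> U" by auto
  have "\<mu> * real (card U) \<le> 1/3 * 2" using assms by (intro mult_mono) auto
  hence "real (card {u}) \<ge> \<mu> * real (card U)" by simp
  thus ?thesis using u Sp_single[OF assms(1) assms(6), of p u] by (intro exI[of _ "{u}"]) auto
qed

lemma big_step:
  fixes \<eta> \<mu>0 \<epsilon> \<delta> :: real
  assumes sg: "sg F" and fU: "finite U" and A: "A \<subseteq> U" and B: "B \<subseteq> U" and AB: "A \<inter> B = {}"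
    and cA: "real (card A) \<ge> \<delta> * card U" and cB: "real (card B) \<ge> \<delta> * card U"
    and e: "real (ec F A B) \<le> \<epsilon> * card A * card B"
    and \<delta>: "\<delta> > 0" and U0: "card U > 0" and \<epsilon>: "\<epsilon> = \<eta> * \<mu>0" and \<mu>0: "\<mu>0 > 0" and \<eta>: "\<eta> > 0"
    and p2: "p \<ge> 2"
    and IH: "\<And>U'. U' \<subseteq> U \<Longrightarrow> \<exists>T'. T' \<subseteq> U' \<and> real (card T') \<ge> \<mu>0 * real (card U') \<and> (Sp F (p - 1) \<eta> T' \<or> Q T')"
  shows "\<exists>T. T \<subseteq> U \<and> real (card T) \<ge> \<mu>0 * \<delta> * real (card U) \<and> (Sp F p \<eta> T \<or> Q T)"
proof -
  define m where "m = min (card A) (card B)"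
  have fA: "finite A" and fB: "finite B" using A B fU finite_subset by auto
  have pos: "\<delta> * card U > 0" using \<delta> U0 by simp
  have Ane: "A \<noteq> {}" using cA pos by auto
  have Bne: "B \<noteq> {}" using cB pos by auto
  have mr: "real m \<ge> \<delta> * card U" unfolding m_def using cA cB by (simp add: min_def)
  have m0: "m > 0" using mr pos by linarith
  obtain A1 B1 where AB1: "A1 \<subseteq> A" "B1 \<subseteq> B" "card A1 = m" "card B1 = m" "real (ec F A1 B1) \<le> \<epsilon> * m * m"
    using trim2[OF sg fA fB Ane Bne e, of m] unfolding m_def by auto
  have fA1: "finite A1" and fB1: "finite B1" using AB1 fA fB finite_subset by auto
  obtain T' where T': "T' \<subseteq> B1" "real (card T') \<ge> \<mu>0 * real (card B1)" "Sp F (p - 1) \<eta> T' \<or> Q T'"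
    using IH[of B1] AB1 B by blast
  have bound: "\<mu>0 * real m \<ge> \<mu>0 * \<delta> * card U" using mr \<mu>0 by (simp add: mult.assoc)
  show ?thesis
  proof (cases "Q T'")
    case True
    thus ?thesis using T' AB1 B bound by (intro exI[of _ T']) auto
  next
    case False
    hence Sp': "Sp F (p - 1) \<eta> T'" using T' by auto
    have dj: "A1 \<inter> B1 = {}" using AB1 AB by auto
    have "0 \<le> \<epsilon>" using \<epsilon> \<mu>0 \<eta> by simp
    from extend[OF sg fA1 fB1 dj AB1(3) AB1(4) m0 AB1(5) this T'(1) _ Sp' _ p2 \<mu>0]
    obtain T where T: "T \<subseteq> A1 \<union> B1" "card T \<ge> card T'" "Sp F p \<eta> T"
      using T'(2) AB1(4) \<epsilon> \<eta> by auto
    have "real (card T) \<ge> real (card T')" using T(2) by simp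
    moreover have "T \<subseteq> U" using T(1) AB1(1,2) A B by blast
    ultimately show ?thesis using T(3) T'(2) AB1(4) bound by (intro exI[of _ T]) auto
  qed
qed

lemma rodl:
  fixes \<eta> :: real
  assumes \<eta>: "0 < \<eta>" "\<eta> \<le> 1"
  shows "\<exists>\<mu>. RP k p q \<eta> \<mu>"
proof (induction "p + q" arbitrary: p q rule: less_induct)
  case less
  show ?case
  proof (cases "p \<le> 1 \<or> q \<le> 1")
    case True
    have "RP k p q \<eta> 1" unfolding RP_def
    proof (intro conjI allI impI)
      fix V E U assume h: "sg E \<and> finite V \<and> \<not> contains_induced V E k path_adj \<and> U \<subseteq> V"
      hence fU: "finite U" using finite_subset by blast
      show "\<exists>T. T \<subseteq> U \<and> real (card T) \<ge> 1 * real (card U) \<and> (Sp E p \<eta> T \<or> Sp (cE E) q \<eta> T)"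
        using True Sp_triv[OF fU, of p \<eta> E] Sp_triv[OF fU, of q \<eta> "cE E"] \<eta> by (intro exI[of _ U]) auto
    qed simp
    thus ?thesis ..
  next
    case False
    hence p2: "p \<ge> 2" and q2: "q \<ge> 2" by auto
    obtain \<mu>1 where \<mu>1: "RP k (p - 1) q \<eta> \<mu>1" using less[of "p - 1" q] p2 by auto
    obtain \<mu>2 where \<mu>2: "RP k p (q - 1) \<eta> \<mu>2" using less[of p "q - 1"] q2 by auto
    define \<mu>0 where "\<mu>0 = min (min \<mu>1 \<mu>2) 1"
    have \<mu>0p: "\<mu>0 > 0" using \<mu>1 \<mu>2 unfolding RP_def \<mu>0_def by auto
    have \<mu>01: "\<mu>0 \<le> 1" "\<mu>0 \<le> \<mu>1" "\<mu>0 \<le> \<mu>2" unfolding \<mu>0_def by auto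
    define \<epsilon> where "\<epsilon> = \<eta> * \<mu>0"
    have \<epsilon>0: "\<epsilon> > 0" using \<eta> \<mu>0p unfolding \<epsilon>_def by simp
    have \<epsilon>1: "\<epsilon> \<le> 1" using \<eta> \<mu>01 \<mu>0p unfolding \<epsilon>_def by (simp add: mult_le_one)
    define \<delta> where "\<delta> = \<epsilon> ^ k / 6"
    have \<delta>0: "\<delta> > 0" using \<epsilon>0 unfolding \<delta>_def by simp
    define \<mu> where "\<mu> = min (1/3) (\<mu>0 * \<delta>)"
    have \<mu>p: "\<mu> > 0" using \<mu>0p \<delta>0 unfolding \<mu>_def by simp
    have "RP k p q \<eta> \<mu>" unfolding RP_def
    proof (intro conjI allI impI \<mu>p)
      fix V E U assume h: "sg E \<and> finite V \<and> \<not> contains_induced V E k path_adj \<and> U \<subseteq> V"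
      hence sg: "sg E" and fV: "finite V" and nP: "\<not> contains_induced V E k path_adj" and UV: "U \<subseteq> V"
        by auto
      have fU: "finite U" using fV UV finite_subset by blast
      show "\<exists>T. T \<subseteq> U \<and> real (card T) \<ge> \<mu> * real (card U) \<and> (Sp E p \<eta> T \<or> Sp (cE E) q \<eta> T)"
      proof (cases "card U < 3")
        case True
        thus ?thesis using small_case[OF sg fU True \<mu>p] \<eta> unfolding \<mu>_def by auto
      next
        case False
        hence cU: "card U \<ge> 3" by simp
        have nPU: "\<not> contains_induced U E k path_adj" using nP ci_mono UV by blast
        obtain A B where AB: "A \<subseteq> U" "B \<subseteq> U" "A \<inter> B = {}" "real (card A) \<ge> \<delta> * card U"
            "real (card B) \<ge> \<delta> * card U"
            "real (ec E A B) \<le> \<epsilon> * card A * card B \<or> real (ec (cE E) A B) \<le> \<epsilon> * card A * card B"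
          using lemmaE[OF sg fU cU \<epsilon>0 \<epsilon>1 nPU] unfolding pairc_def \<delta>_def by blast
        have U0: "card U > 0" using cU by simp
        have le: "\<mu> * real (card U) \<le> \<mu>0 * \<delta> * real (card U)" unfolding \<mu>_def by (intro mult_right_mono) auto
        from AB(6) show ?thesis
        proof
          assume e: "real (ec E A B) \<le> \<epsilon> * card A * card B"
          have IH: "\<exists>T'. T' \<subseteq> U' \<and> real (card T') \<ge> \<mu>0 * real (card U') \<and> (Sp E (p - 1) \<eta> T' \<or> Sp (cE E) q \<eta> T')"
            if U'U: "U' \<subseteq> U" for U'
          proof -
            obtain T' where T': "T' \<subseteq> U'" "real (card T') \<ge> \<mu>1 * real (card U')" "Sp E (p - 1) \<eta> T' \<or> Sp (cE E) q \<eta> T'"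
            proof -
              have hh: "sg E \<and> finite V \<and> \<not> contains_induced V E k path_adj \<and> U' \<subseteq> V" using h U'U UV by auto
              from \<mu>1 have R: "\<forall>V E U. sg E \<and> finite V \<and> \<not> contains_induced V E k path_adj \<and> U \<subseteq> V \<longrightarrow>
                 (\<exists>T. T \<subseteq> U \<and> real (card T) \<ge> \<mu>1 * real (card U) \<and> (Sp E (p - 1) \<eta> T \<or> Sp (cE E) q \<eta> T))"
                unfolding RP_def by (rule conjunct2)
              from R[rule_format, OF hh] show ?thesis by (elim exE conjE) (rule that; assumption)
            qed
            moreover have "\<mu>0 * real (card U') \<le> \<mu>1 * real (card U')" using \<mu>01 by (intro mult_right_mono) auto
            ultimately show ?thesis by (intro exI[of _ T']) auto
          qed
          obtain T where "T \<subseteq> U" "real (card T) \<ge> \<mu>0 * \<delta> * real (card U)" "Sp E p \<eta> T \<or> Sp (cE E) q \<eta> T"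
            using big_step[OF sg fU AB(1-5) e \<delta>0 U0 \<epsilon>_def \<mu>0p \<eta>(1) p2, of "Sp (cE E) q \<eta>"] IH by blast
          thus ?thesis using le by (intro exI[of _ T]) auto
        next
          assume e: "real (ec (cE E) A B) \<le> \<epsilon> * card A * card B"
          have IH: "\<exists>T'. T' \<subseteq> U' \<and> real (card T') \<ge> \<mu>0 * real (card U') \<and> (Sp (cE E) (q - 1) \<eta> T' \<or> Sp E p \<eta> T')"
            if U'U: "U' \<subseteq> U" for U'
          proof -
            obtain T' where T': "T' \<subseteq> U'" "real (card T') \<ge> \<mu>2 * real (card U')" "Sp E p \<eta> T' \<or> Sp (cE E) (q - 1) \<eta> T'"
            proof -
              have hh: "sg E \<and> finite V \<and> \<not> contains_induced V E k path_adj \<and> U' \<subseteq> V" using h U'U UV by auto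
              from \<mu>2 have R: "\<forall>V E U. sg E \<and> finite V \<and> \<not> contains_induced V E k path_adj \<and> U \<subseteq> V \<longrightarrow>
                 (\<exists>T. T \<subseteq> U \<and> real (card T) \<ge> \<mu>2 * real (card U) \<and> (Sp E p \<eta> T \<or> Sp (cE E) (q - 1) \<eta> T))"
                unfolding RP_def by (rule conjunct2)
              from R[rule_format, OF hh] show ?thesis by (elim exE conjE) (rule that; assumption)
            qed
            moreover have "\<mu>0 * real (card U') \<le> \<mu>2 * real (card U')" using \<mu>01 by (intro mult_right_mono) auto
            ultimately show ?thesis by (intro exI[of _ T']) auto
          qed
          obtain T where "T \<subseteq> U" "real (card T) \<ge> \<mu>0 * \<delta> * real (card U)" "Sp (cE E) q \<eta> T \<or> Sp E p \<eta> T"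
            using big_step[OF sg_cE[OF sg] fU AB(1-5) e \<delta>0 U0 \<epsilon>_def \<mu>0p \<eta>(1) q2, of "Sp E p \<eta>"] IH by blast
          thus ?thesis using le by (intro exI[of _ T]) auto
        qed
      qed
    qed
    thus ?thesis ..
  qed
qed

definition conn :: "(nat \<Rightarrow> nat \<Rightarrow> bool) \<Rightarrow> nat set \<Rightarrow> bool" where
  "conn F C \<longleftrightarrow> (\<forall>Y. Y \<noteq> {} \<and> Y \<subset> C \<longrightarrow> (\<exists>x\<in>Y. \<exists>y\<in>C - Y. F x y))"

definition clin :: "(nat \<Rightarrow> nat \<Rightarrow> bool) \<Rightarrow> nat set \<Rightarrow> nat set \<Rightarrow> bool" where
  "clin F M X \<longleftrightarrow> X \<subseteq> M \<and> (\<forall>x\<in>X. \<forall>y\<in>M - X. \<not> F x y)"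

lemma link:
  assumes "conn F C" "M \<subseteq> C" "clin F M C'" "C' \<noteq> {}" "C' \<noteq> C"
  shows "\<exists>x\<in>C'. \<exists>y\<in>C - M. F x y"
proof -
  have "C' \<subset> C" using assms unfolding clin_def by auto
  then obtain x y where xy: "x \<in> C'" "y \<in> C - C'" "F x y" using assms(1,4) unfolding conn_def by blast
  have "y \<notin> M" using xy assms(3) unfolding clin_def by blast
  thus ?thesis using xy by blast
qed

lemma giant:
  fixes \<delta> :: real
  assumes sg: "sg F" and fM: "finite M" and Mbig: "real (card M) \<ge> 3 * \<delta> * s" and pos: "\<delta> * s > 0"
    and NP: "\<And>X Y. X \<subseteq> M \<Longrightarrow> Y \<subseteq> M \<Longrightarrow> X \<inter> Y = {} \<Longrightarrow> real (card X) \<ge> \<delta> * s \<Longrightarrow>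
               real (card Y) \<ge> \<delta> * s \<Longrightarrow> (\<forall>x\<in>X. \<forall>y\<in>Y. \<not> F x y) \<Longrightarrow> False"
  shows "\<exists>C. C \<noteq> {} \<and> conn F C \<and> clin F M C \<and> real (card C) > real (card M) - \<delta> * s"
proof -
  have claim: "real (card X) < \<delta> * s \<or> real (card X) > real (card M) - \<delta> * s" if X: "clin F M X" for X
  proof (rule ccontr)
    assume "\<not> ?thesis"
    hence h: "real (card X) \<ge> \<delta> * s" "real (card X) \<le> real (card M) - \<delta> * s" by auto
    have XM: "X \<subseteq> M" using X unfolding clin_def by auto
    have "card (M - X) = card M - card X" using XM fM by (simp add: card_Diff_subset finite_subset)
    moreover have "card X \<le> card M" using XM fM card_mono by blast
    ultimately have "real (card (M - X)) = real (card M) - real (card X)" by simp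
    hence "real (card (M - X)) \<ge> \<delta> * s" using h by simp
    thus False using NP[of X "M - X"] h XM X unfolding clin_def by auto
  qed
  define P where "P X \<longleftrightarrow> clin F M X \<and> real (card X) > real (card M) - \<delta> * s" for X
  have PM: "P M" unfolding P_def clin_def using pos by auto
  define c where "c = (LEAST c. \<exists>X. P X \<and> card X = c)"
  have "\<exists>X. P X \<and> card X = c" unfolding c_def by (rule LeastI[of _ "card M"]) (use PM in auto)
  then obtain X where X: "P X" "card X = c" by blast
  have min: "card X \<le> card Y" if "P Y" for Y
    using X(2) that unfolding c_def by (metis (mono_tags, lifting) Least_le)
  have XM: "X \<subseteq> M" using X unfolding P_def clin_def by auto
  have fX: "finite X" using XM fM finite_subset by blast
  have Xc: "real (card X) > real (card M) - \<delta> * s" using X unfolding P_def by auto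
  have Xne: "X \<noteq> {}" using Xc Mbig pos by auto
  have "conn F X" unfolding conn_def
  proof (intro allI impI)
    fix Y assume Y: "Y \<noteq> {} \<and> Y \<subset> X"
    show "\<exists>x\<in>Y. \<exists>y\<in>X - Y. F x y"
    proof (rule ccontr)
      assume ne: "\<not> ?thesis"
      have clX: "\<forall>x\<in>X. \<forall>y\<in>M - X. \<not> F x y" using X unfolding P_def clin_def by auto
      have c1: "clin F M Y" unfolding clin_def
      proof (intro conjI ballI)
        show "Y \<subseteq> M" using Y XM by auto
      next
        fix x y assume "x \<in> Y" "y \<in> M - Y"
        thus "\<not> F x y" using ne clX Y by blast
      qed
      have c2: "clin F M (X - Y)" unfolding clin_def
      proof (intro conjI ballI)
        show "X - Y \<subseteq> M" using XM by auto
      next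
        fix x y assume "x \<in> X - Y" "y \<in> M - (X - Y)"
        moreover have "\<not> F y x" if "y \<in> Y" using ne that \<open>x \<in> X - Y\<close> by blast
        ultimately show "\<not> F x y" using clX sg unfolding sg_def by blast
      qed
      have lt1: "card Y < card X" using Y fX psubset_card_mono by blast
      have "X - Y \<subset> X" using Y by blast
      hence lt2: "card (X - Y) < card X" using fX psubset_card_mono by blast
      have "\<not> P Y" using min lt1 by fastforce
      hence s1: "real (card Y) < \<delta> * s" using claim[OF c1] c1 unfolding P_def by auto
      have "\<not> P (X - Y)" using min lt2 by fastforce
      hence s2: "real (card (X - Y)) < \<delta> * s" using claim[OF c2] c2 unfolding P_def by auto
      have "card X = card Y + card (X - Y)" using Y fX
        by (metis card_Un_disjoint Diff_disjoint Un_Diff_cancel2 finite_Diff finite_subset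
            psubset_imp_subset sup.absorb2 sup_commute)
      hence "real (card X) < 2 * \<delta> * s" using s1 s2 by simp
      thus False using Xc Mbig by linarith
    qed
  qed
  thus ?thesis using X Xne Xc unfolding P_def by blast
qed

definition pinvar :: "(nat \<Rightarrow> nat \<Rightarrow> bool) \<Rightarrow> nat set \<Rightarrow> nat \<Rightarrow> nat set \<Rightarrow> (nat \<Rightarrow> nat) \<Rightarrow> bool" where
  "pinvar F S i C f \<longleftrightarrow> inj_on f {0..<i} \<and> f ` {0..<i} \<subseteq> S \<and>
     (\<forall>a<i. \<forall>b<i. a \<noteq> b \<longrightarrow> (F (f a) (f b) \<longleftrightarrow> path_adj a b)) \<and>
     C \<subseteq> S \<and> C \<inter> f ` {0..<i} = {} \<and> (\<forall>c\<in>C. \<forall>j. j + 1 < i \<longrightarrow> \<not> F c (f j)) \<and>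
     conn F C \<and> (\<exists>c\<in>C. F (f (i - 1)) c)"

lemma pstep:
  fixes \<delta> :: real
  assumes sg: "sg F" and fS: "finite S" and p: "pinvar F S i C f" and i1: "i \<ge> 1"
    and deg: "\<forall>v\<in>S. real (nb F v S) \<le> \<delta> * card S"
    and NP: "\<And>X Y. X \<subseteq> S \<Longrightarrow> Y \<subseteq> S \<Longrightarrow> X \<inter> Y = {} \<Longrightarrow> real (card X) \<ge> \<delta> * card S \<Longrightarrow>
               real (card Y) \<ge> \<delta> * card S \<Longrightarrow> (\<forall>x\<in>X. \<forall>y\<in>Y. \<not> F x y) \<Longrightarrow> False"
    and big: "real (card C) - \<delta> * card S \<ge> 3 * \<delta> * card S" and pos: "\<delta> * card S > 0"
  shows "\<exists>C' g. pinvar F S (Suc i) C' g \<and> real (card C') > real (card C) - 2 * \<delta> * card S"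
proof -
  have f1: "inj_on f {0..<i}" and f2: "f ` {0..<i} \<subseteq> S"
    and f3: "\<forall>a<i. \<forall>b<i. a \<noteq> b \<longrightarrow> (F (f a) (f b) \<longleftrightarrow> path_adj a b)"
    and C1: "C \<subseteq> S" and C2: "C \<inter> f ` {0..<i} = {}" and C3: "\<forall>c\<in>C. \<forall>j. j + 1 < i \<longrightarrow> \<not> F c (f j)"
    and C4: "conn F C" and C5: "\<exists>c\<in>C. F (f (i - 1)) c"
    using p unfolding pinvar_def by auto
  define w where "w = f (i - 1)"
  have wS: "w \<in> S" using f2 i1 unfolding w_def by auto
  have fC: "finite C" using C1 fS finite_subset by blast
  define M where "M = {c\<in>C. \<not> F w c}"
  have MC: "M \<subseteq> C" unfolding M_def by auto
  have fM: "finite M" using MC fC finite_subset by blast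
  have "C - M \<subseteq> {u\<in>S. F w u}" using C1 unfolding M_def by auto
  hence A: "card (C - M) \<le> nb F w S" unfolding nb_def using fS by (intro card_mono) auto
  have B: "real (nb F w S) \<le> \<delta> * card S" using deg wS by blast
  have "real (card (C - M)) \<le> real (nb F w S)" using A by simp
  hence "real (card (C - M)) \<le> \<delta> * card S" using B by linarith
  moreover have "card M = card C - card (C - M)"
  proof -
    have e: "C - (C - M) = M" using MC by blast
    have "card (C - (C - M)) = card C - card (C - M)" using fC by (intro card_Diff_subset) auto
    thus ?thesis using e by simp
  qed
  moreover have "card (C - M) \<le> card C" using fC by (simp add: card_mono)
  ultimately have cM: "real (card M) \<ge> real (card C) - \<delta> * card S" by (simp add: of_nat_diff)
  have NPM: "False" if "X \<subseteq> M" "Y \<subseteq> M" "X \<inter> Y = {}" "real (card X) \<ge> \<delta> * card S"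
    "real (card Y) \<ge> \<delta> * card S" "\<forall>x\<in>X. \<forall>y\<in>Y. \<not> F x y" for X Y
  proof -
    have "X \<subseteq> S" "Y \<subseteq> S" using that(1,2) MC C1 by auto
    thus False using NP[of X Y] that(3-6) by blast
  qed
  have Mb: "real (card M) \<ge> 3 * \<delta> * card S" using cM big by linarith
  from giant[OF sg fM Mb pos NPM] obtain C' where
    C'all: "C' \<noteq> {} \<and> conn F C' \<and> clin F M C' \<and> real (card C') > real (card M) - \<delta> * card S" ..
  hence C': "C' \<noteq> {}" "conn F C'" "clin F M C'" "real (card C') > real (card M) - \<delta> * card S" by auto
  obtain c where c: "c \<in> C" "F w c" using C5 unfolding w_def by blast
  have "c \<notin> M" using c unfolding M_def by auto
  hence "C' \<noteq> C" using C' c unfolding clin_def by auto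
  then obtain x y where xy: "x \<in> C'" "y \<in> C - M" "F x y" using link[OF C4 MC C'(3) C'(1)] by blast
  have yC: "y \<in> C" and wy: "F w y" using xy unfolding M_def by auto
  have C'M: "C' \<subseteq> M" using C' unfolding clin_def by auto
  define g where "g = f(i := y)"
  have yf: "y \<notin> f ` {0..<i}" using yC C2 by auto
  have gi: "g ` {0..<Suc i} = insert y (f ` {0..<i})" unfolding g_def by (auto simp: image_def less_Suc_eq)
  have "pinvar F S (Suc i) C' g" unfolding pinvar_def
  proof (intro conjI)
    have "inj_on g {0..<i}" using f1 unfolding g_def inj_on_def by auto
    moreover have "g i \<notin> g ` {0..<i}" using yf unfolding g_def by (auto simp: image_def)
    ultimately show "inj_on g {0..<Suc i}" by (simp add: atLeast0_lessThan_Suc inj_on_insert)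
    show "g ` {0..<Suc i} \<subseteq> S" using gi f2 yC C1 by auto
    show "\<forall>a<Suc i. \<forall>b<Suc i. a \<noteq> b \<longrightarrow> (F (g a) (g b) \<longleftrightarrow> path_adj a b)"
    proof (intro allI impI)
      fix a b assume ab: "a < Suc i" "b < Suc i" "a \<noteq> b"
      have Ey: "F y (f j) \<longleftrightarrow> j + 1 = i" if "j < i" for j
      proof (cases "j + 1 = i")
        case True
        hence "f j = w" unfolding w_def by auto
        thus ?thesis using wy sg True unfolding sg_def by auto
      next
        case False
        thus ?thesis using C3 yC that by auto
      qed
      have Ey': "F (f j) y \<longleftrightarrow> j + 1 = i" if "j < i" for j using Ey[OF that] sg unfolding sg_def by blast
      show "F (g a) (g b) \<longleftrightarrow> path_adj a b"
      proof (cases "a = i")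
        case True
        hence "b < i" using ab by auto
        thus ?thesis using True Ey unfolding g_def path_adj_def by auto
      next
        case False
        hence a: "a < i" using ab by auto
        show ?thesis
        proof (cases "b = i")
          case True
          thus ?thesis using a Ey' unfolding g_def path_adj_def by auto
        next
          case False
          thus ?thesis using a ab f3 \<open>a \<noteq> i\<close> unfolding g_def by auto
        qed
      qed
    qed
    show "C' \<subseteq> S" using C'M MC C1 by auto
    have "C' \<subseteq> C" using C'M MC by auto
    hence "C' \<inter> f ` {0..<i} = {}" using C2 by blast
    moreover have "y \<notin> C'" using C'M xy(2) by auto
    ultimately show "C' \<inter> g ` {0..<Suc i} = {}" using gi by simp
    show "\<forall>c\<in>C'. \<forall>j. j + 1 < Suc i \<longrightarrow> \<not> F c (g j)"
    proof (intro ballI allI impI)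
      fix c j assume c: "c \<in> C'" and j: "j + 1 < Suc i"
      have cM: "c \<in> M" using c C'M by auto
      show "\<not> F c (g j)"
      proof (cases "j + 1 = i")
        case True
        hence "g j = w" unfolding g_def w_def by auto
        thus ?thesis using cM sg unfolding M_def sg_def by auto
      next
        case False
        hence "j + 1 < i" using j by auto
        thus ?thesis using C3 cM MC unfolding g_def by auto
      qed
    qed
    show "conn F C'" by (rule C'(2))
    show "\<exists>c\<in>C'. F (g (Suc i - 1)) c" using xy sg unfolding g_def sg_def by auto
  qed
  moreover have "real (card C') > real (card C) - 2 * \<delta> * card S" using C'(4) cM by linarith
  ultimately show ?thesis by blast
qed

lemma SL:
  fixes \<delta> :: real
  assumes sg: "sg F" and fS: "finite S" and k1: "k \<ge> 1" and \<delta>0: "\<delta> > 0" and \<delta>k: "(4 * real k + 8) * \<delta> \<le> 1"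
    and S2: "card S \<ge> 2"
    and deg: "\<forall>v\<in>S. real (nb F v S) \<le> \<delta> * card S"
    and NP: "\<And>X Y. X \<subseteq> S \<Longrightarrow> Y \<subseteq> S \<Longrightarrow> X \<inter> Y = {} \<Longrightarrow> real (card X) \<ge> \<delta> * card S \<Longrightarrow>
               real (card Y) \<ge> \<delta> * card S \<Longrightarrow> (\<forall>x\<in>X. \<forall>y\<in>Y. \<not> F x y) \<Longrightarrow> False"
  shows "contains_induced S F k path_adj"
proof -
  define s where "s = real (card S)"
  have s2: "s \<ge> 2" using S2 unfolding s_def by simp
  have pos: "\<delta> * s > 0" using \<delta>0 s2 by simp
  have d8: "8 * \<delta> \<le> 1"
  proof -
    have "4 * real k * \<delta> \<ge> 0" using \<delta>0 by simp
    moreover have "(4 * real k + 8) * \<delta> = 4 * real k * \<delta> + 8 * \<delta>" by (simp add: algebra_simps)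
    ultimately show ?thesis using \<delta>k by linarith
  qed
  have "3 * \<delta> * s \<le> 1 * s" using d8 s2 by (intro mult_right_mono) auto
  hence Sb: "real (card S) \<ge> 3 * \<delta> * s" unfolding s_def by simp
  from giant[OF sg fS Sb pos NP] obtain C0 where
    C0all: "C0 \<noteq> {} \<and> conn F C0 \<and> clin F S C0 \<and> real (card C0) > real (card S) - \<delta> * s"
    unfolding s_def ..
  hence C0: "C0 \<noteq> {}" "conn F C0" "clin F S C0" "real (card C0) > s - \<delta> * s" unfolding s_def by auto
  have C0S: "C0 \<subseteq> S" using C0 unfolding clin_def by auto
  have fC0: "finite C0" using C0S fS finite_subset by blast
  obtain v where v: "v \<in> C0" using C0 by auto
  define M1 where "M1 = C0 - {v}"
  have fM1: "finite M1" using fC0 unfolding M1_def by simp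
  have "card C0 > 0" using v fC0 by (auto simp: card_gt_0_iff)
  hence "card C0 \<ge> 1" by simp
  hence cM1: "real (card M1) = real (card C0) - 1" unfolding M1_def using v fC0
    by (simp add: of_nat_diff)
  have "4 * \<delta> * s \<le> 1/2 * s" using d8 s2 by (intro mult_right_mono) auto
  hence M1b: "real (card M1) \<ge> 3 * \<delta> * s" using cM1 C0(4) s2 by linarith
  have NPM: "False" if "X \<subseteq> M1" "Y \<subseteq> M1" "X \<inter> Y = {}" "real (card X) \<ge> \<delta> * s"
    "real (card Y) \<ge> \<delta> * s" "\<forall>x\<in>X. \<forall>y\<in>Y. \<not> F x y" for X Y
  proof -
    have "X \<subseteq> S" "Y \<subseteq> S" using that(1,2) C0S unfolding M1_def by auto
    thus False using NP[of X Y] that(3-6) unfolding s_def by blast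
  qed
  from giant[OF sg fM1 M1b pos NPM] obtain C1 where
    C1all: "C1 \<noteq> {} \<and> conn F C1 \<and> clin F M1 C1 \<and> real (card C1) > real (card M1) - \<delta> * s" ..
  hence C1: "C1 \<noteq> {}" "conn F C1" "clin F M1 C1" "real (card C1) > real (card M1) - \<delta> * s" by auto
  have C1M: "C1 \<subseteq> M1" using C1 unfolding clin_def by auto
  have "C1 \<noteq> C0" using C1M v unfolding M1_def by auto
  moreover have "M1 \<subseteq> C0" unfolding M1_def by auto
  ultimately obtain x y where xy: "x \<in> C1" "y \<in> C0 - M1" "F x y" using link[OF C0(2) _ C1(3) C1(1)] by blast
  have "y = v" using xy v unfolding M1_def by auto
  hence vx: "F v x" using xy sg unfolding sg_def by auto
  have pi1: "pinvar F S 1 C1 (\<lambda>_. v)" unfolding pinvar_def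
    using C1M C0S v vx xy(1) unfolding M1_def conn_def by (auto simp: C1(2)[unfolded conn_def])
  have b1: "real (card C1) \<ge> s - 2 * real 1 * \<delta> * s - 1" using C1(4) cM1 C0(4) by simp
  have it: "\<forall>i. 1 \<le> i \<and> i \<le> k \<longrightarrow> (\<exists>C f. pinvar F S i C f \<and> real (card C) \<ge> s - 2 * real i * \<delta> * s - 1)"
  proof (intro allI)
    fix i show "1 \<le> i \<and> i \<le> k \<longrightarrow> (\<exists>C f. pinvar F S i C f \<and> real (card C) \<ge> s - 2 * real i * \<delta> * s - 1)"
    proof (induction i)
      case 0 show ?case by simp
    next
      case (Suc i)
      show ?case
      proof (cases "i = 0")
        case True thus ?thesis using pi1 b1 by auto
      next
        case False
        show ?thesis
        proof
          assume h: "1 \<le> Suc i \<and> Suc i \<le> k"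
          hence "1 \<le> i \<and> i \<le> k" using False by auto
          then obtain C f where Cf: "pinvar F S i C f" "real (card C) \<ge> s - 2 * real i * \<delta> * s - 1"
            using Suc.IH by blast
          have "(2 * real i + 4) * \<delta> \<le> 1 / 2"
          proof -
            have "real i + 1 \<le> real k" using h by simp
            hence "(2 * real i + 4) * \<delta> \<le> (2 * real k + 2) * \<delta>" using \<delta>0 by (intro mult_right_mono) auto
            also have "\<dots> \<le> 1/2" using \<delta>k \<delta>0 by (simp add: algebra_simps)
            finally show ?thesis .
          qed
          hence "(2 * real i + 4) * \<delta> * s \<le> 1/2 * s" using s2 by (intro mult_right_mono) auto
          hence hh: "2 * real i * \<delta> * s + 4 * \<delta> * s \<le> s / 2" by (simp add: algebra_simps)
          have big: "real (card C) - \<delta> * card S \<ge> 3 * \<delta> * card S" using Cf(2) hh s2 unfolding s_def by linarith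
          have i1: "1 \<le> i" using \<open>1 \<le> i \<and> i \<le> k\<close> by simp
          have pos': "\<delta> * real (card S) > 0" using pos unfolding s_def .
          have ex: "\<exists>C' g. pinvar F S (Suc i) C' g \<and> real (card C') > real (card C) - 2 * \<delta> * card S"
            by (rule pstep[OF sg fS Cf(1) i1 deg _ big pos']) (rule NP; assumption)
          then obtain C' g where
            "pinvar F S (Suc i) C' g \<and> real (card C') > real (card C) - 2 * \<delta> * card S" by blast
          moreover have "s - 2 * real (Suc i) * \<delta> * s - 1 = s - 2 * real i * \<delta> * s - 1 - 2 * \<delta> * s"
            by (simp add: algebra_simps)
          ultimately show "\<exists>C f. pinvar F S (Suc i) C f \<and> real (card C) \<ge> s - 2 * real (Suc i) * \<delta> * s - 1"
            using Cf(2) unfolding s_def by (intro exI[of _ C'] exI[of _ g]) auto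
        qed
      qed
    qed
  qed
  then obtain C f where "pinvar F S k C f" using k1 by blast
  thus ?thesis unfolding pinvar_def contains_induced_def by (intro exI[of _ f]) auto
qed

lemma Sp_density:
  fixes \<eta> :: real
  assumes "Sp F r \<eta> T" "r > 0"
  shows "real (ec F T T) \<le> (1 / r + \<eta>) * (real (card T))^2"
proof -
  obtain s :: nat where s: "real (ec F T T) \<le> real s * real (card T) + \<eta> * (real (card T))^2" "card T \<ge> r * s"
    using assms(1) unfolding Sp_def by blast
  have "real r * real s \<le> real (card T)" using s(2) by (metis of_nat_le_iff of_nat_mult)
  hence "real s \<le> real (card T) / r" using assms(2) by (simp add: field_simps mult.commute)
  hence "real s * real (card T) \<le> real (card T) / r * real (card T)" by (intro mult_right_mono) auto
  thus ?thesis using s(1) by (simp add: power2_eq_square algebra_simps)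
qed

lemma core:
  fixes \<delta> \<eta> :: real
  assumes sg: "sg F" and fT: "finite T" and k1: "k \<ge> 1" and \<delta>: "\<delta> = 1 / (4 * real k + 8)"
    and r: "real r = 8 / \<delta>" and \<eta>: "\<eta> = \<delta> / 8" and Sp: "Sp F r \<eta> T" and T4: "card T \<ge> 4"
    and nP: "\<not> contains_induced T F k path_adj"
  shows "\<exists>X Y. X \<subseteq> T \<and> Y \<subseteq> T \<and> X \<inter> Y = {} \<and> real (card X) \<ge> \<delta> / 2 * card T \<and>
            real (card Y) \<ge> \<delta> / 2 * card T \<and> (\<forall>x\<in>X. \<forall>y\<in>Y. \<not> F x y)"
proof -
  define t where "t = real (card T)"
  have \<delta>0: "\<delta> > 0" using \<delta> by simp
  have "\<delta> \<le> 1 / 8" unfolding \<delta> by (rule divide_left_mono) auto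
  hence \<delta>1: "\<delta> \<le> 1" by simp
  have rpos: "r > 0" using r \<delta>0 by (metis of_nat_0_less_iff zero_less_divide_iff zero_less_numeral)
  have t4: "t \<ge> 4" using T4 unfolding t_def by simp
  have dens: "real (ec F T T) \<le> \<delta> / 4 * t^2"
  proof -
    have "1 / real r + \<eta> = \<delta> / 4" using r \<eta> \<delta>0 by simp
    thus ?thesis using Sp_density[OF Sp rpos] unfolding t_def by metis
  qed
  define S where "S = {v\<in>T. real (nb F v T) \<le> \<delta> / 2 * t}"
  have ST: "S \<subseteq> T" unfolding S_def by auto
  have fS: "finite S" using ST fT finite_subset by blast
  have TS: "real (card (T - S)) \<le> t / 2"
  proof -
    have "(\<Sum>v\<in>T - S. \<delta> / 2 * t) \<le> (\<Sum>v\<in>T - S. real (nb F v T))"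
      by (intro sum_mono) (auto simp: S_def)
    also have "\<dots> \<le> (\<Sum>v\<in>T. real (nb F v T))" using fT by (intro sum_mono2) auto
    also have "\<dots> = real (ec F T T)" unfolding ec_def by simp
    also have "\<dots> \<le> \<delta> / 4 * t^2" by (rule dens)
    finally have "real (card (T - S)) * (\<delta> / 2 * t) \<le> (t / 2) * (\<delta> / 2 * t)"
      by (simp add: power2_eq_square algebra_simps)
    moreover have "\<delta> / 2 * t > 0" using \<delta>0 t4 by simp
    ultimately show ?thesis by (rule mult_right_le_imp_le)
  qed
  have cS: "real (card S) \<ge> t / 2"
  proof -
    have "card T = card S + card (T - S)" using ST fT
      by (metis card_Diff_subset card_mono finite_subset le_add_diff_inverse)
    thus ?thesis using TS unfolding t_def by simp
  qed
  have S2: "card S \<ge> 2" using cS t4 by linarith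
  have deg: "\<forall>v\<in>S. real (nb F v S) \<le> \<delta> * card S"
  proof
    fix v assume v: "v \<in> S"
    have "nb F v S \<le> nb F v T" using nb_mono[OF fT ST] .
    moreover have "real (nb F v T) \<le> \<delta> / 2 * t" using v unfolding S_def by auto
    moreover have "\<delta> / 2 * t \<le> \<delta> * card S" using cS \<delta>0 by (simp add: field_simps)
    ultimately show "real (nb F v S) \<le> \<delta> * card S" by (meson of_nat_le_iff order_trans)
  qed
  have \<delta>k: "(4 * real k + 8) * \<delta> \<le> 1" using \<delta> by simp
  show ?thesis
  proof (rule ccontr)
    assume no: "\<not> ?thesis"
    have NP: "False" if "X \<subseteq> S" "Y \<subseteq> S" "X \<inter> Y = {}" "real (card X) \<ge> \<delta> * card S"
      "real (card Y) \<ge> \<delta> * card S" "\<forall>x\<in>X. \<forall>y\<in>Y. \<not> F x y" for X Y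
    proof -
      have "\<delta> / 2 * card T \<le> \<delta> * card S" using cS \<delta>0 unfolding t_def by (simp add: field_simps)
      hence "X \<subseteq> T \<and> Y \<subseteq> T \<and> X \<inter> Y = {} \<and> real (card X) \<ge> \<delta> / 2 * card T \<and>
            real (card Y) \<ge> \<delta> / 2 * card T \<and> (\<forall>x\<in>X. \<forall>y\<in>Y. \<not> F x y)" using that ST by auto
      thus False using no by blast
    qed
    have "contains_induced S F k path_adj"
      by (rule SL[OF sg fS k1 \<delta>0 \<delta>k S2 deg]) (rule NP; assumption)
    hence "contains_induced T F k path_adj" using ci_mono ST by blast
    thus False using nP by contradiction
  qed
qed

lemma two_elems: assumes "finite V" "card V \<ge> 2" obtains u v where "u \<in> V" "v \<in> V" "u \<noteq> v"
proof -
  have "V \<noteq> {}" using assms by auto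
  then obtain u where u: "u \<in> V" by auto
  have "card (V - {u}) \<ge> 1" using assms u by simp
  hence "card (V - {u}) \<noteq> 0" by simp
  hence "V - {u} \<noteq> {}" by (metis card.empty)
  then obtain v where "v \<in> V - {u}" by auto
  thus ?thesis using that u by auto
qed

lemma part1:
  assumes k1: "k \<ge> 1"
  shows "\<exists>c::real. c > 0 \<and>
           (\<forall>V E. simple_graph V E \<and> card V \<ge> 2 \<and>
              \<not> contains_induced V E k path_adj \<and> \<not> contains_induced V E k copath_adj \<longrightarrow>
              (\<exists>X Y. X \<subseteq> V \<and> Y \<subseteq> V \<and> X \<inter> Y = {} \<and>
                 real (card X) \<ge> c * real (card V) \<and> real (card Y) \<ge> c * real (card V) \<and>
                 ((\<forall>x\<in>X. \<forall>y\<in>Y. E x y) \<or> (\<forall>x\<in>X. \<forall>y\<in>Y. \<not> E x y))))"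
proof -
  define \<delta> :: real where "\<delta> = 1 / (4 * real k + 8)"
  define r :: nat where "r = 32 * k + 64"
  define \<eta> :: real where "\<eta> = \<delta> / 8"
  have \<delta>0: "\<delta> > 0" unfolding \<delta>_def by simp
  have "\<delta> \<le> 1 / 8" unfolding \<delta>_def by (rule divide_left_mono) auto
  hence \<delta>1: "\<delta> \<le> 1" by simp
  have rr: "real r = 8 / \<delta>" unfolding r_def \<delta>_def by simp
  have \<eta>0: "0 < \<eta>" "\<eta> \<le> 1" using \<delta>0 \<delta>1 unfolding \<eta>_def by auto
  obtain \<mu> where \<mu>: "RP k r r \<eta> \<mu>" using rodl[OF \<eta>0] by blast
  have \<mu>0: "\<mu> > 0" using \<mu> unfolding RP_def by auto
  from \<mu> have R: "\<forall>V E U. sg E \<and> finite V \<and> \<not> contains_induced V E k path_adj \<and> U \<subseteq> V \<longrightarrow>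
     (\<exists>T. T \<subseteq> U \<and> real (card T) \<ge> \<mu> * real (card U) \<and> (Sp E r \<eta> T \<or> Sp (cE E) r \<eta> T))"
    unfolding RP_def by (rule conjunct2)
  define c where "c = min (\<mu> * \<delta> / 2) (\<mu> / 4)"
  have c0: "c > 0" unfolding c_def using \<mu>0 \<delta>0 by simp
  show ?thesis
  proof (intro exI[of _ c] conjI c0 allI impI)
    fix V E assume h: "simple_graph V E \<and> card V \<ge> 2 \<and>
              \<not> contains_induced V E k path_adj \<and> \<not> contains_induced V E k copath_adj"
    have fV: "finite V" and sg: "sg E" using h unfolding simple_graph_def sg_def by auto
    have V2: "card V \<ge> 2" and nP: "\<not> contains_induced V E k path_adj"
      and nQ: "\<not> contains_induced V E k copath_adj" using h by auto
    have hh: "sg E \<and> finite V \<and> \<not> contains_induced V E k path_adj \<and> V \<subseteq> V" using sg fV nP by auto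
    from R[rule_format, OF hh] obtain T where
      T: "T \<subseteq> V" "real (card T) \<ge> \<mu> * real (card V)" "Sp E r \<eta> T \<or> Sp (cE E) r \<eta> T" by blast
    have fT: "finite T" using T fV finite_subset by blast
    have cT: "c * real (card V) \<le> \<delta> / 2 * real (card T)"
    proof -
      have "c * real (card V) \<le> \<mu> * \<delta> / 2 * real (card V)" unfolding c_def by (intro mult_right_mono) auto
      also have "\<dots> = \<delta> / 2 * (\<mu> * real (card V))" by simp
      also have "\<dots> \<le> \<delta> / 2 * real (card T)" using T(2) \<delta>0 by (intro mult_left_mono) auto
      finally show ?thesis .
    qed
    show "\<exists>X Y. X \<subseteq> V \<and> Y \<subseteq> V \<and> X \<inter> Y = {} \<and>
                 real (card X) \<ge> c * real (card V) \<and> real (card Y) \<ge> c * real (card V) \<and>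
                 ((\<forall>x\<in>X. \<forall>y\<in>Y. E x y) \<or> (\<forall>x\<in>X. \<forall>y\<in>Y. \<not> E x y))"
    proof (cases "card T \<ge> 4")
      case T4: True
      from T(3) show ?thesis
      proof
        assume Sp: "Sp E r \<eta> T"
        have nPT: "\<not> contains_induced T E k path_adj" using nP ci_mono T(1) by blast
        obtain X Y where XY: "X \<subseteq> T" "Y \<subseteq> T" "X \<inter> Y = {}" "real (card X) \<ge> \<delta> / 2 * card T"
            "real (card Y) \<ge> \<delta> / 2 * card T" "\<forall>x\<in>X. \<forall>y\<in>Y. \<not> E x y"
          using core[OF sg fT k1 \<delta>_def rr \<eta>_def Sp T4 nPT] by blast
        show ?thesis using XY T(1) cT by (intro exI[of _ X] exI[of _ Y]) auto
      next
        assume Sp: "Sp (cE E) r \<eta> T"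
        have nPT: "\<not> contains_induced T (cE E) k path_adj" using nQ ci_mono T(1) ci_cE by blast
        obtain X Y where XY: "X \<subseteq> T" "Y \<subseteq> T" "X \<inter> Y = {}" "real (card X) \<ge> \<delta> / 2 * card T"
            "real (card Y) \<ge> \<delta> / 2 * card T" "\<forall>x\<in>X. \<forall>y\<in>Y. \<not> cE E x y"
          using core[OF sg_cE[OF sg] fT k1 \<delta>_def rr \<eta>_def Sp T4 nPT] by blast
        have "\<forall>x\<in>X. \<forall>y\<in>Y. E x y"
        proof (intro ballI)
          fix x y assume xy: "x \<in> X" "y \<in> Y"
          hence "x \<noteq> y" using XY(3) by auto
          moreover have "\<not> cE E x y" using XY(6) xy by auto
          ultimately show "E x y" unfolding cE_def by auto
        qed
        thus ?thesis using XY T(1) cT by (intro exI[of _ X] exI[of _ Y]) auto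
      qed
    next
      case False
      hence "real (card T) \<le> 3" by simp
      hence "\<mu> * real (card V) \<le> 3" using T(2) by linarith
      moreover have "c * real (card V) \<le> \<mu> / 4 * real (card V)" unfolding c_def by (intro mult_right_mono) auto
      ultimately have c1: "c * real (card V) \<le> 1" by simp
      obtain u v where uv: "u \<in> V" "v \<in> V" "u \<noteq> v" using two_elems[OF fV V2] by blast
      show ?thesis using uv c1 by (intro exI[of _ "{u}"] exI[of _ "{v}"]) auto
    qed
  qed
qed

lemma num_aux:
  fixes kx ky ix iy m :: real
  assumes "0 \<le> kx" "0 \<le> ky" "ix \<le> m" "iy \<le> m"
  shows "kx * ix + ky * iy \<le> (kx + ky) * m"
proof -
  have "kx * ix \<le> kx * m" using assms by (intro mult_left_mono) auto
  moreover have "ky * iy \<le> ky * m" using assms by (intro mult_left_mono) auto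
  ultimately show ?thesis by (simp add: algebra_simps)
qed

lemma part2_ind:
  fixes c a :: real
  assumes c0: "0 < c" and hc: "1 \<le> 2 * c powr (2 * a)" and a0: "a > 0"
    and P: "\<forall>V E. simple_graph V E \<and> card V \<ge> 2 \<and>
              \<not> contains_induced V E k path_adj \<and> \<not> contains_induced V E k copath_adj \<longrightarrow>
              (\<exists>X Y. X \<subseteq> V \<and> Y \<subseteq> V \<and> X \<inter> Y = {} \<and>
                 real (card X) \<ge> c * real (card V) \<and> real (card Y) \<ge> c * real (card V) \<and>
                 ((\<forall>x\<in>X. \<forall>y\<in>Y. E x y) \<or> (\<forall>x\<in>X. \<forall>y\<in>Y. \<not> E x y)))"
  shows "simple_graph V E \<Longrightarrow> \<not> contains_induced V E k path_adj \<Longrightarrow> \<not> contains_induced V E k copath_adj \<Longrightarrow>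
     \<exists>K I. K \<subseteq> V \<and> I \<subseteq> V \<and> is_clique E K \<and> is_stable E I \<and>
       real (card K) * real (card I) \<ge> real (card V) powr (2 * a)"
proof (induction "card V" arbitrary: V rule: less_induct)
  case less
  have fV: "finite V" and sym: "\<forall>x y. E x y \<longrightarrow> E y x" and irr: "\<forall>x. \<not> E x x"
    using less.prems(1) unfolding simple_graph_def by auto
  show ?case
  proof (cases "card V \<ge> 2")
    case False
    show ?thesis
    proof (cases "card V = 0")
      case True
      hence "V = {}" using fV by simp
      thus ?thesis by (intro exI[of _ "{}"]) (auto simp: is_clique_def is_stable_def)
    next
      case False
      hence "card V = 1" using \<open>\<not> card V \<ge> 2\<close> by simp
      then obtain v where "V = {v}" using card_1_singletonE by blast
      thus ?thesis using irr by (intro exI[of _ "{v}"]) (auto simp: is_clique_def is_stable_def)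
    qed
  next
    case True
    define n where "n = real (card V)"
    have hh: "simple_graph V E \<and> card V \<ge> 2 \<and>
              \<not> contains_induced V E k path_adj \<and> \<not> contains_induced V E k copath_adj"
      using less.prems True by auto
    from P[rule_format, OF hh] obtain X Y where XY: "X \<subseteq> V" "Y \<subseteq> V" "X \<inter> Y = {}"
        "real (card X) \<ge> c * n" "real (card Y) \<ge> c * n"
        "(\<forall>x\<in>X. \<forall>y\<in>Y. E x y) \<or> (\<forall>x\<in>X. \<forall>y\<in>Y. \<not> E x y)"
      unfolding n_def by blast
    have cn: "c * n > 0" using c0 True unfolding n_def by simp
    have Xne: "X \<noteq> {}" and Yne: "Y \<noteq> {}" using XY(4,5) cn by auto
    have fX: "finite X" and fY: "finite Y" using XY fV finite_subset by auto
    have "X \<subset> V" using XY(1,2,3) Yne by blast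
    hence ltX: "card X < card V" using fV psubset_card_mono by blast
    have "Y \<subset> V" using XY(1,2,3) Xne by blast
    hence ltY: "card Y < card V" using fV psubset_card_mono by blast
    have sgX: "simple_graph X E" and sgY: "simple_graph Y E" using fX fY sym irr unfolding simple_graph_def by auto
    have nX: "\<not> contains_induced X E k path_adj" "\<not> contains_induced X E k copath_adj"
      using less.prems ci_mono XY(1) by blast+
    have nY: "\<not> contains_induced Y E k path_adj" "\<not> contains_induced Y E k copath_adj"
      using less.prems ci_mono XY(2) by blast+
    obtain KX IX where X': "KX \<subseteq> X" "IX \<subseteq> X" "is_clique E KX" "is_stable E IX"
        "real (card KX) * real (card IX) \<ge> real (card X) powr (2 * a)"
      using less.hyps[OF ltX sgX nX] by blast
    obtain KY IY where Y': "KY \<subseteq> Y" "IY \<subseteq> Y" "is_clique E KY" "is_stable E IY"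
        "real (card KY) * real (card IY) \<ge> real (card Y) powr (2 * a)"
      using less.hyps[OF ltY sgY nY] by blast
    have fKX: "finite KX" "finite IX" "finite KY" "finite IY"
      using finite_subset[OF X'(1) fX] finite_subset[OF X'(2) fX] finite_subset[OF Y'(1) fY]
        finite_subset[OF Y'(2) fY] by auto
    have bX: "real (card X) powr (2 * a) \<ge> c powr (2 * a) * n powr (2 * a)"
    proof -
      have "(c * n) powr (2 * a) \<le> real (card X) powr (2 * a)" using XY(4) cn a0 by (intro powr_mono2) auto
      thus ?thesis by (simp add: powr_mult)
    qed
    have bY: "real (card Y) powr (2 * a) \<ge> c powr (2 * a) * n powr (2 * a)"
    proof -
      have "(c * n) powr (2 * a) \<le> real (card Y) powr (2 * a)" using XY(5) cn a0 by (intro powr_mono2) auto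
      thus ?thesis by (simp add: powr_mult)
    qed
    have sumb: "real (card X) powr (2 * a) + real (card Y) powr (2 * a) \<ge> n powr (2 * a)"
    proof -
      have "1 * n powr (2 * a) \<le> 2 * c powr (2 * a) * n powr (2 * a)"
        by (rule mult_right_mono[OF hc]) simp
      hence "n powr (2 * a) \<le> 2 * c powr (2 * a) * n powr (2 * a)" by simp
      thus ?thesis using bX bY by linarith
    qed
    from XY(6) show ?thesis
    proof
      assume comp: "\<forall>x\<in>X. \<forall>y\<in>Y. E x y"
      define K where "K = KX \<union> KY"
      define I where "I = (if card IX \<ge> card IY then IX else IY)"
      have cK: "card K = card KX + card KY" unfolding K_def using fKX X' Y' XY(3)
        by (intro card_Un_disjoint) auto
      have "is_clique E K" unfolding is_clique_def K_def
      proof (intro ballI impI)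
        fix x y assume "x \<in> KX \<union> KY" "y \<in> KX \<union> KY" "x \<noteq> y"
        thus "E x y" using X' Y' comp sym unfolding is_clique_def by blast
      qed
      moreover have "is_stable E I" unfolding I_def using X' Y' by auto
      moreover have "K \<subseteq> V" "I \<subseteq> V" unfolding K_def I_def using X' Y' XY by auto
      moreover have "real (card K) * real (card I) \<ge> n powr (2 * a)"
      proof -
        have "real (card KX) * real (card IX) + real (card KY) * real (card IY)
              \<le> (real (card KX) + real (card KY)) * real (card I)"
          by (rule num_aux) (auto simp: I_def)
        thus ?thesis using X'(5) Y'(5) sumb cK by simp
      qed
      ultimately show ?thesis unfolding n_def by blast
    next
      assume anti: "\<forall>x\<in>X. \<forall>y\<in>Y. \<not> E x y"
      define I where "I = IX \<union> IY"
      define K where "K = (if card KX \<ge> card KY then KX else KY)"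
      have cI: "card I = card IX + card IY" unfolding I_def using fKX X' Y' XY(3)
        by (intro card_Un_disjoint) auto
      have "is_stable E I" unfolding is_stable_def I_def
      proof (intro ballI)
        fix x y assume "x \<in> IX \<union> IY" "y \<in> IX \<union> IY"
        thus "\<not> E x y" using X' Y' anti sym unfolding is_stable_def by blast
      qed
      moreover have "is_clique E K" unfolding K_def using X' Y' by auto
      moreover have "K \<subseteq> V" "I \<subseteq> V" unfolding K_def I_def using X' Y' XY by auto
      moreover have "real (card K) * real (card I) \<ge> n powr (2 * a)"
      proof -
        have "real (card IX) * real (card KX) + real (card IY) * real (card KY)
              \<le> (real (card IX) + real (card IY)) * real (card K)"
          by (rule num_aux) (auto simp: K_def)
        thus ?thesis using X'(5) Y'(5) sumb cI by (simp add: mult.commute)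
      qed
      ultimately show ?thesis unfolding n_def by blast
    qed
  qed
qed

theorem theorem4:
  shows "(\<forall>k::nat. k \<ge> 1 \<longrightarrow> (\<exists>c::real. c > 0 \<and>
           (\<forall>V E. simple_graph V E \<and> card V \<ge> 2 \<and>
              \<not> contains_induced V E k path_adj \<and> \<not> contains_induced V E k copath_adj \<longrightarrow>
              (\<exists>X Y. X \<subseteq> V \<and> Y \<subseteq> V \<and> X \<inter> Y = {} \<and>
                 real (card X) \<ge> c * real (card V) \<and> real (card Y) \<ge> c * real (card V) \<and>
                 ((\<forall>x\<in>X. \<forall>y\<in>Y. E x y) \<or> (\<forall>x\<in>X. \<forall>y\<in>Y. \<not> E x y))))))
   \<and> (\<forall>k::nat. k \<ge> 1 \<longrightarrow> (\<exists>c'::real. c' > 0 \<and>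
           (\<forall>V E. simple_graph V E \<and>
              \<not> contains_induced V E k path_adj \<and> \<not> contains_induced V E k copath_adj \<longrightarrow>
              (\<exists>S. S \<subseteq> V \<and> (is_clique E S \<or> is_stable E S) \<and>
                 real (card S) \<ge> real (card V) powr c'))))"
proof (intro conjI allI impI)
  fix k :: nat assume "k \<ge> 1"
  thus "\<exists>c::real. c > 0 \<and>
           (\<forall>V E. simple_graph V E \<and> card V \<ge> 2 \<and>
              \<not> contains_induced V E k path_adj \<and> \<not> contains_induced V E k copath_adj \<longrightarrow>
              (\<exists>X Y. X \<subseteq> V \<and> Y \<subseteq> V \<and> X \<inter> Y = {} \<and>
                 real (card X) \<ge> c * real (card V) \<and> real (card Y) \<ge> c * real (card V) \<and>
                 ((\<forall>x\<in>X. \<forall>y\<in>Y. E x y) \<or> (\<forall>x\<in>X. \<forall>y\<in>Y. \<not> E x y))))"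
    by (rule part1)
next
  fix k :: nat assume k1: "k \<ge> 1"
  obtain c :: real where c: "c > 0" and P: "\<forall>V E. simple_graph V E \<and> card V \<ge> 2 \<and>
              \<not> contains_induced V E k path_adj \<and> \<not> contains_induced V E k copath_adj \<longrightarrow>
              (\<exists>X Y. X \<subseteq> V \<and> Y \<subseteq> V \<and> X \<inter> Y = {} \<and>
                 real (card X) \<ge> c * real (card V) \<and> real (card Y) \<ge> c * real (card V) \<and>
                 ((\<forall>x\<in>X. \<forall>y\<in>Y. E x y) \<or> (\<forall>x\<in>X. \<forall>y\<in>Y. \<not> E x y)))"
    using part1[OF k1] by blast
  define c0 where "c0 = min c (1/2)"
  have c00: "c0 > 0" "c0 \<le> c" "c0 \<le> 1/2" using c unfolding c0_def by auto
  have P0: "\<forall>V E. simple_graph V E \<and> card V \<ge> 2 \<and>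
              \<not> contains_induced V E k path_adj \<and> \<not> contains_induced V E k copath_adj \<longrightarrow>
              (\<exists>X Y. X \<subseteq> V \<and> Y \<subseteq> V \<and> X \<inter> Y = {} \<and>
                 real (card X) \<ge> c0 * real (card V) \<and> real (card Y) \<ge> c0 * real (card V) \<and>
                 ((\<forall>x\<in>X. \<forall>y\<in>Y. E x y) \<or> (\<forall>x\<in>X. \<forall>y\<in>Y. \<not> E x y)))"
  proof (intro allI impI)
    fix V E assume h: "simple_graph V E \<and> card V \<ge> 2 \<and>
              \<not> contains_induced V E k path_adj \<and> \<not> contains_induced V E k copath_adj"
    from P[rule_format, OF h] obtain X Y where XY: "X \<subseteq> V" "Y \<subseteq> V" "X \<inter> Y = {}"
        "real (card X) \<ge> c * real (card V)" "real (card Y) \<ge> c * real (card V)"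
        "(\<forall>x\<in>X. \<forall>y\<in>Y. E x y) \<or> (\<forall>x\<in>X. \<forall>y\<in>Y. \<not> E x y)" by blast
    have "c0 * real (card V) \<le> c * real (card V)" using c00 by (intro mult_right_mono) auto
    thus "\<exists>X Y. X \<subseteq> V \<and> Y \<subseteq> V \<and> X \<inter> Y = {} \<and>
                 real (card X) \<ge> c0 * real (card V) \<and> real (card Y) \<ge> c0 * real (card V) \<and>
                 ((\<forall>x\<in>X. \<forall>y\<in>Y. E x y) \<or> (\<forall>x\<in>X. \<forall>y\<in>Y. \<not> E x y))"
      using XY by (intro exI[of _ X] exI[of _ Y]) auto
  qed
  have lc: "ln c0 < 0" using c00 by simp
  define a where "a = - ln 2 / (2 * ln c0)"
  have a0: "a > 0" unfolding a_def using lc by (simp add: divide_pos_neg)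
  have "c0 powr (2 * a) = exp (2 * a * ln c0)" using c00 by (simp add: powr_def)
  also have "2 * a * ln c0 = - ln 2" unfolding a_def using lc by simp
  also have "exp (- ln 2) = (1/2 :: real)" by (simp add: exp_minus)
  finally have hc: "1 \<le> 2 * c0 powr (2 * a)" by simp
  show "\<exists>c'::real. c' > 0 \<and>
           (\<forall>V E. simple_graph V E \<and>
              \<not> contains_induced V E k path_adj \<and> \<not> contains_induced V E k copath_adj \<longrightarrow>
              (\<exists>S. S \<subseteq> V \<and> (is_clique E S \<or> is_stable E S) \<and>
                 real (card S) \<ge> real (card V) powr c'))"
  proof (intro exI[of _ a] conjI a0 allI impI)
    fix V E assume h: "simple_graph V E \<and>
              \<not> contains_induced V E k path_adj \<and> \<not> contains_induced V E k copath_adj"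
    obtain K I where KI: "K \<subseteq> V" "I \<subseteq> V" "is_clique E K" "is_stable E I"
       "real (card K) * real (card I) \<ge> real (card V) powr (2 * a)"
      using part2_ind[OF c00(1) hc a0 P0, of V E] h by blast
    show "\<exists>S. S \<subseteq> V \<and> (is_clique E S \<or> is_stable E S) \<and> real (card S) \<ge> real (card V) powr a"
    proof (cases "real (card K) \<ge> real (card V) powr a")
      case True thus ?thesis using KI by (intro exI[of _ K]) auto
    next
      case F1: False
      show ?thesis
      proof (cases "real (card I) \<ge> real (card V) powr a")
        case True thus ?thesis using KI by (intro exI[of _ I]) auto
      next
        case False
        have "real (card K) * real (card I) < real (card V) powr a * real (card V) powr a"
        proof -
          have "0 \<le> real (card K)" by simp
          hence p: "0 < real (card V) powr a" using F1 by linarith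
          show ?thesis using F1 False p by (intro mult_strict_mono) auto
        qed
        also have "\<dots> = real (card V) powr (2 * a)" by (simp add: powr_add[symmetric])
        finally show ?thesis using KI(5) by linarith
      qed
    qed
  qed
qed

end
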